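(* Let $K$ be an idempotent ordered TGP-$\omega$-valuation monoid, $AP$ a finite set of atomic propositions, $k\in K\setminus\{\mathbf{0},\mathbf{1}\}$, and $\varphi=\bigvee_{1\le i\le n}(k_i\wedge\varphi_i)\in k\text{-}stLTL(K,AP)$, and let $\varphi_b:=\bigvee_{1\le i\le n}\varphi_i$. Then for every $w\in(\mathcal{P}(AP))^{\omega}$: $(\|\varphi\|,w)\ge k$ if and only if $w\models\varphi_b$.
   Context: Idempotent ordered TGP-$\omega$-valuation monoid $(K,+,\cdot,Val^{\omega},\mathbf{0},\mathbf{1})$: complete (infinitary sums over arbitrary index sets with the usual axioms), idempotent monoid $(K,+,\mathbf{0})$, totally ordered by the natural order $k\le k'$ iff $k'=k'+k$, with $Val^{\omega}$ from finitely-valued sequences in $K$ to $K$ and a product $\cdot$ with zero $\mathbf{0}$ and unit $\mathbf{1}$, such that $Val^{\omega}=\mathbf{0}$ if some entry is $\mathbf{0}$, $Val^{\omega}(\mathbf{1}^{\omega})=\mathbf{1}$, $\sum_I(k\cdot\mathbf{1})=k\cdot\sum_I\mathbf{1}$, $Val^{\omega}$ distributes over finite sums of families lying entirely in $L\setminus\{\mathbf{0},\mathbf{1}\}$ or entirely in $\{\mathbf{0},\mathbf{1}\}$ ($L\subseteq K$ finite), and $Val^{\omega}(\mathbf{1},k_1,\dots)=Val^{\omega}(k_1,\dots)$, $Val^{\omega}(k,\mathbf{1},\dots)=k$, $k\le\mathbf{1}$, $k_i\ge k\ \forall i\Rightarrow Val^{\omega}((k_i)_i)\ge k$. Weighted LTL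 over $AP$ and $K$: $\varphi::=k\mid a\mid\neg a\mid\varphi\vee\varphi\mid\varphi\wedge\varphi\mid\bigcirc\varphi\mid\varphi U\varphi\mid\square\varphi$, with semantics $\|\varphi\|:(\mathcal{P}(AP))^{\omega}\to K$: $(\|k\|,w)=k$; $(\|a\|,w)=\mathbf{1}$ if $a\in w(0)$ else $\mathbf{0}$; $\neg a$ dually; $\vee\mapsto +$, $\wedge\mapsto\cdot$ pointwise; $(\|\bigcirc\varphi\|,w)=(\|\varphi\|,w_{\ge1})$; $(\|\varphi U\psi\|,w)=\sum_{i\ge0}Val^{\omega}((\|\varphi\|,w_{\ge0}),\dots,(\|\varphi\|,w_{\ge i-1}),(\|\psi\|,w_{\ge i}),\mathbf{1},\mathbf{1},\dots)$; $(\|\square\varphi\|,w)=Val^{\omega}(((\|\varphi\|,w_{\ge i}))_{i\ge0})$. $true:=\mathbf{1}$, $\varphi\tilde U\psi:=\square\varphi\vee(\varphi U\psi)$. $sbLTL(K,AP)$: $\varphi::=true\mid a\mid\neg a\mid\varphi\vee\varphi\mid\varphi\wedge\varphi\mid\bigcirc\varphi\mid\varphi\tilde U\varphi\mid\square\varphi$. $L_k=\{k'\in K\mid k'\ge k\}$. $k\text{-}stLTL(K,AP)$ consists of formulas $\bigvee_{1\le i\le n}(k_i\wedge\varphi_i)$ with $k_i\in L_k\setminus\{\mathbf{0},\mathbf{1}\}$ and $\varphi_i\in sbLTL(K,AP)$. For a formula $\psi$ built from $true,a,\neg a,\vee,\wedge,\bigcirc,U,\square$ (with $\tilde U$ as abbreviation),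 $w\models\psi$ denotes classical LTL satisfaction at position $0$ (with $w,i\models a$ iff $a\in w(i)$, $\bigcirc$ referring to position $i+1$, $\psi U\chi$ holding at $i$ iff $\chi$ holds at some $j\ge i$ and $\psi$ at all $i\le i'<j$, and $\square\psi$ iff $\psi$ holds at all $j\ge i$). *)

theory Defs
  imports Main
begin

text \<open>Index universe for the infinitary sums: all index sets are subsets of
  nat => nat (this contains copies of nat and of countable products of finite
  subsets of nat, i.e. every index set used in the definition and semantics).\<close>
type_synonym idx = "nat \<Rightarrow> nat"

record 'k tgp =
  vadd  :: "'k \<Rightarrow> 'k \<Rightarrow> 'k"
  vmul  :: "'k \<Rightarrow> 'k \<Rightarrow> 'k"
  vzero :: 'k
  vone  :: 'k
  vsum  :: "(idx \<Rightarrow> 'k) \<Rightarrow> idx set \<Rightarrow> 'k"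
  vval  :: "(nat \<Rightarrow> 'k) \<Rightarrow> 'k"

definition nle :: "'k tgp \<Rightarrow> 'k \<Rightarrow> 'k \<Rightarrow> bool" where
  "nle M k k' \<longleftrightarrow> k' = vadd M k' k"

definition nat_emb :: "nat \<Rightarrow> idx" where
  "nat_emb i = (\<lambda>_. i)"

definition nsum :: "'k tgp \<Rightarrow> (nat \<Rightarrow> 'k) \<Rightarrow> nat set \<Rightarrow> 'k" where
  "nsum M f I = vsum M (\<lambda>u. f (u 0)) (nat_emb ` I)"

definition finval :: "(nat \<Rightarrow> 'k) \<Rightarrow> bool" where
  "finval f \<longleftrightarrow> finite (range f)"

definition complete_monoid :: "'k tgp \<Rightarrow> bool" where
  "complete_monoid M \<longleftrightarrow>
     (\<forall>a b c. vadd M (vadd M a b) c = vadd M a (vadd M b c)) \<and>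
     (\<forall>a b. vadd M a b = vadd M b a) \<and>
     (\<forall>a. vadd M (vzero M) a = a \<and> vadd M a (vzero M) = a) \<and>
     (\<forall>f g I. (\<forall>i\<in>I. f i = g i) \<longrightarrow> vsum M f I = vsum M g I) \<and>
     (\<forall>f. vsum M f {} = vzero M) \<and>
     (\<forall>f j. vsum M f {j} = f j) \<and>
     (\<forall>f j l. j \<noteq> l \<longrightarrow> vsum M f {j, l} = vadd M (f j) (f l)) \<and>
     (\<forall>f (I :: idx \<Rightarrow> idx set) J.
        (\<forall>j\<in>J. \<forall>j'\<in>J. j \<noteq> j' \<longrightarrow> I j \<inter> I j' = {}) \<longrightarrow>
        vsum M (\<lambda>j. vsum M f (I j)) J = vsum M f (\<Union>j\<in>J. I j))"

definition idem_ordered_TGP :: "'k tgp \<Rightarrow> bool" where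
  "idem_ordered_TGP M \<longleftrightarrow>
     complete_monoid M \<and>
     (\<forall>a. vadd M a a = a) \<and>
     (\<forall>a b. nle M a b \<or> nle M b a) \<and>
     (\<forall>a. vmul M (vzero M) a = vzero M \<and> vmul M a (vzero M) = vzero M) \<and>
     (\<forall>a. vmul M (vone M) a = a \<and> vmul M a (vone M) = a) \<and>
     (\<forall>f. finval f \<longrightarrow> (\<exists>i. f i = vzero M) \<longrightarrow> vval M f = vzero M) \<and>
     vval M (\<lambda>_. vone M) = vone M \<and>
     (\<forall>I k. vsum M (\<lambda>_. vmul M k (vone M)) I = vmul M k (vsum M (\<lambda>_. vone M) I)) \<and>
     (\<forall>L (I :: nat \<Rightarrow> nat set) (c :: nat \<Rightarrow> nat \<Rightarrow> 'k).
        finite L \<longrightarrow> (\<forall>i. finite (I i)) \<longrightarrow>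
        ((\<forall>i. \<forall>j\<in>I i. c i j \<in> L - {vzero M, vone M}) \<or>
         (\<forall>i. \<forall>j\<in>I i. c i j \<in> {vzero M, vone M})) \<longrightarrow>
        vval M (\<lambda>i. nsum M (c i) (I i)) =
        vsum M (\<lambda>u. vval M (\<lambda>i. c i (u i))) {u. \<forall>i. u i \<in> I i}) \<and>
     (\<forall>f. finval f \<longrightarrow> vval M (case_nat (vone M) f) = vval M f) \<and>
     (\<forall>k. vval M (case_nat k (\<lambda>_. vone M)) = k) \<and>
     (\<forall>k. nle M k (vone M)) \<and>
     (\<forall>f k. finval f \<longrightarrow> (\<forall>i. nle M k (f i)) \<longrightarrow> nle M k (vval M f))"

datatype ('k, 'ap) wltl =
    Const 'k
  | Atom 'ap
  | NAtom 'ap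
  | Or "('k, 'ap) wltl" "('k, 'ap) wltl"
  | And "('k, 'ap) wltl" "('k, 'ap) wltl"
  | Next "('k, 'ap) wltl"
  | Until "('k, 'ap) wltl" "('k, 'ap) wltl"
  | Box "('k, 'ap) wltl"

type_synonym 'ap word = "nat \<Rightarrow> 'ap set"

definition suffix :: "nat \<Rightarrow> 'ap word \<Rightarrow> 'ap word" where
  "suffix i w = (\<lambda>j. w (i + j))"

definition wtrue :: "'k tgp \<Rightarrow> ('k, 'ap) wltl" where
  "wtrue M = Const (vone M)"

definition WUntil :: "('k, 'ap) wltl \<Rightarrow> ('k, 'ap) wltl \<Rightarrow> ('k, 'ap) wltl" where
  "WUntil \<phi> \<psi> = Or (Box \<phi>) (Until \<phi> \<psi>)"

fun sem :: "'k tgp \<Rightarrow> ('k, 'ap) wltl \<Rightarrow> 'ap word \<Rightarrow> 'k" where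
  "sem M (Const k) w = k"
| "sem M (Atom a) w = (if a \<in> w 0 then vone M else vzero M)"
| "sem M (NAtom a) w = (if a \<notin> w 0 then vone M else vzero M)"
| "sem M (Or \<phi> \<psi>) w = vadd M (sem M \<phi> w) (sem M \<psi> w)"
| "sem M (And \<phi> \<psi>) w = vmul M (sem M \<phi> w) (sem M \<psi> w)"
| "sem M (Next \<phi>) w = sem M \<phi> (suffix 1 w)"
| "sem M (Until \<phi> \<psi>) w =
     nsum M (\<lambda>i. vval M (\<lambda>j. if j < i then sem M \<phi> (suffix j w)
                              else if j = i then sem M \<psi> (suffix i w)
                              else vone M)) UNIV"
| "sem M (Box \<phi>) w = vval M (\<lambda>i. sem M \<phi> (suffix i w))"

inductive sbLTL :: "'k tgp \<Rightarrow> ('k, 'ap) wltl \<Rightarrow> bool" for M where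
  sb_true: "sbLTL M (wtrue M)"
| sb_atom: "sbLTL M (Atom a)"
| sb_natom: "sbLTL M (NAtom a)"
| sb_or: "sbLTL M \<phi> \<Longrightarrow> sbLTL M \<psi> \<Longrightarrow> sbLTL M (Or \<phi> \<psi>)"
| sb_and: "sbLTL M \<phi> \<Longrightarrow> sbLTL M \<psi> \<Longrightarrow> sbLTL M (And \<phi> \<psi>)"
| sb_next: "sbLTL M \<phi> \<Longrightarrow> sbLTL M (Next \<phi>)"
| sb_wuntil: "sbLTL M \<phi> \<Longrightarrow> sbLTL M \<psi> \<Longrightarrow> sbLTL M (WUntil \<phi> \<psi>)"
| sb_box: "sbLTL M \<phi> \<Longrightarrow> sbLTL M (Box \<phi>)"

fun bigOr :: "('k, 'ap) wltl list \<Rightarrow> ('k, 'ap) wltl" where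
  "bigOr [] = Const undefined"
| "bigOr [\<phi>] = \<phi>"
| "bigOr (\<phi> # \<psi> # \<phi>s) = Or \<phi> (bigOr (\<psi> # \<phi>s))"

definition stform :: "('k \<times> ('k, 'ap) wltl) list \<Rightarrow> ('k, 'ap) wltl" where
  "stform ps = bigOr (map (\<lambda>(ki, \<phi>i). And (Const ki) \<phi>i) ps)"

definition bskel :: "('k \<times> ('k, 'ap) wltl) list \<Rightarrow> ('k, 'ap) wltl" where
  "bskel ps = bigOr (map snd ps)"

definition kstLTL :: "'k tgp \<Rightarrow> 'k \<Rightarrow> ('k \<times> ('k, 'ap) wltl) list \<Rightarrow> bool" where
  "kstLTL M k ps \<longleftrightarrow> ps \<noteq> [] \<and>
     (\<forall>(ki, \<phi>i) \<in> set ps. nle M k ki \<and> ki \<noteq> vzero M \<and> ki \<noteq> vone M \<and> sbLTL M \<phi>i)"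

text \<open>Only applied to formulas whose constants are true (= 1); a constant is read as true.\<close>
fun sat :: "'ap word \<Rightarrow> ('k, 'ap) wltl \<Rightarrow> bool" where
  "sat w (Const k) = True"
| "sat w (Atom a) = (a \<in> w 0)"
| "sat w (NAtom a) = (a \<notin> w 0)"
| "sat w (Or \<phi> \<psi>) = (sat w \<phi> \<or> sat w \<psi>)"
| "sat w (And \<phi> \<psi>) = (sat w \<phi> \<and> sat w \<psi>)"
| "sat w (Next \<phi>) = sat (suffix 1 w) \<phi>"
| "sat w (Until \<phi> \<psi>) = (\<exists>j. sat (suffix j w) \<psi> \<and> (\<forall>i<j. sat (suffix i w) \<phi>))"
| "sat w (Box \<phi>) = (\<forall>j. sat (suffix j w) \<phi>)"

end

theory Submission
  imports Defs
begin

lemma parts: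
  assumes "idem_ordered_TGP M"
  shows P0: "(\<forall>a b c. vadd M (vadd M a b) c = vadd M a (vadd M b c))"
    and P1: "(\<forall>a b. vadd M a b = vadd M b a)"
    and P2: "(\<forall>a. vadd M (vzero M) a = a \<and> vadd M a (vzero M) = a)"
    and P3: "(\<forall>f g I. (\<forall>i\<in>I. f i = g i) \<longrightarrow> vsum M f I = vsum M g I)"
    and P4: "(\<forall>f. vsum M f {} = vzero M)"
    and P5: "(\<forall>f j. vsum M f {j} = f j)"
    and P6: "(\<forall>f j l. j \<noteq> l \<longrightarrow> vsum M f {j, l} = vadd M (f j) (f l))"
    and P7: "(\<forall>f (I :: idx \<Rightarrow> idx set) J.
        (\<forall>j\<in>J. \<forall>j'\<in>J. j \<noteq> j' \<longrightarrow> I j \<inter> I j' = {}) \<longrightarrow>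
        vsum M (\<lambda>j. vsum M f (I j)) J = vsum M f (\<Union>j\<in>J. I j))"
    and P8: "(\<forall>a. vadd M a a = a)"
    and P9: "(\<forall>a b. nle M a b \<or> nle M b a)"
    and P10: "(\<forall>a. vmul M (vzero M) a = vzero M \<and> vmul M a (vzero M) = vzero M)"
    and P11: "(\<forall>a. vmul M (vone M) a = a \<and> vmul M a (vone M) = a)"
    and P12: "(\<forall>f. finval f \<longrightarrow> (\<exists>i. f i = vzero M) \<longrightarrow> vval M f = vzero M)"
    and P13: "vval M (\<lambda>_. vone M) = vone M"
    and P14: "(\<forall>I k. vsum M (\<lambda>_. vmul M k (vone M)) I = vmul M k (vsum M (\<lambda>_. vone M) I))"
    and P15: "(\<forall>L (I :: nat \<Rightarrow> nat set) (c :: nat \<Rightarrow> nat \<Rightarrow> 'k).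
        finite L \<longrightarrow> (\<forall>i. finite (I i)) \<longrightarrow>
        ((\<forall>i. \<forall>j\<in>I i. c i j \<in> L - {vzero M, vone M}) \<or>
         (\<forall>i. \<forall>j\<in>I i. c i j \<in> {vzero M, vone M})) \<longrightarrow>
        vval M (\<lambda>i. nsum M (c i) (I i)) =
        vsum M (\<lambda>u. vval M (\<lambda>i. c i (u i))) {u. \<forall>i. u i \<in> I i})"
    and P16: "(\<forall>f. finval f \<longrightarrow> vval M (case_nat (vone M) f) = vval M f)"
    and P17: "(\<forall>k. vval M (case_nat k (\<lambda>_. vone M)) = k)"
    and P18: "(\<forall>k. nle M k (vone M))"
    and P19: "(\<forall>f k. finval f \<longrightarrow> (\<forall>i. nle M k (f i)) \<longrightarrow> nle M k (vval M f))"
  apply (insert assms)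
  unfolding idem_ordered_TGP_def complete_monoid_def
  apply (elim conjE, assumption)+
  done

lemma add_assoc:
  assumes "idem_ordered_TGP M"
  shows "vadd M (vadd M a b) c = vadd M a (vadd M b c)"
  using parts(1)[OF assms] by blast

lemma add_comm:
  assumes "idem_ordered_TGP M"
  shows "vadd M a b = vadd M b a"
  using parts(2)[OF assms] by blast

lemma add_zero1:
  assumes "idem_ordered_TGP M"
  shows "vadd M (vzero M) a = a"
  using parts(3)[OF assms] by blast

lemma add_zero2:
  assumes "idem_ordered_TGP M"
  shows "vadd M a (vzero M) = a"
  using parts(3)[OF assms] by blast

lemmas add_zero = add_zero1 add_zero2

lemma sum_cong:
  assumes "idem_ordered_TGP M"
  shows "(\<forall>i\<in>I. f i = g i) \<Longrightarrow> vsum M f I = vsum M g I"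
  using parts(4)[OF assms] by blast

lemma sum_empty:
  assumes "idem_ordered_TGP M"
  shows "vsum M f {} = vzero M"
  using parts(5)[OF assms] by blast

lemma sum_single:
  assumes "idem_ordered_TGP M"
  shows "vsum M f {j} = f j"
  using parts(6)[OF assms] by blast

lemma sum_pair:
  assumes "idem_ordered_TGP M"
  shows "j \<noteq> l \<Longrightarrow> vsum M f {j, l} = vadd M (f j) (f l)"
  using parts(7)[OF assms] by blast

lemma sum_part:
  assumes "idem_ordered_TGP M"
  shows "(\<forall>j\<in>J. \<forall>j'\<in>J. j \<noteq> j' \<longrightarrow> II j \<inter> II j' = {}) \<Longrightarrow>
        vsum M (\<lambda>j. vsum M f (II j)) J = vsum M f (\<Union>j\<in>J. II j)"
  using parts(8)[OF assms] by blast

lemma idem: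
  assumes "idem_ordered_TGP M"
  shows "vadd M a a = a"
  using parts(9)[OF assms] by blast

lemma total:
  assumes "idem_ordered_TGP M"
  shows "nle M a b \<or> nle M b a"
  using parts(10)[OF assms] by blast

lemma mul_zero1:
  assumes "idem_ordered_TGP M"
  shows "vmul M (vzero M) a = vzero M"
  using parts(11)[OF assms] by blast

lemma mul_zero2:
  assumes "idem_ordered_TGP M"
  shows "vmul M a (vzero M) = vzero M"
  using parts(11)[OF assms] by blast

lemmas mul_zero = mul_zero1 mul_zero2

lemma mul_one1:
  assumes "idem_ordered_TGP M"
  shows "vmul M (vone M) a = a"
  using parts(12)[OF assms] by blast

lemma mul_one2:
  assumes "idem_ordered_TGP M"
  shows "vmul M a (vone M) = a"
  using parts(12)[OF assms] by blast

lemmas mul_one = mul_one1 mul_one2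

lemma val_zero:
  assumes "idem_ordered_TGP M"
  shows "finval h \<Longrightarrow> h i = vzero M \<Longrightarrow> vval M h = vzero M"
  using parts(13)[OF assms] by blast

lemma val_one:
  assumes "idem_ordered_TGP M"
  shows "vval M (\<lambda>_. vone M) = vone M"
  using parts(14)[OF assms] by blast

lemma sum_const:
  assumes "idem_ordered_TGP M"
  shows "vsum M (\<lambda>_. vmul M k (vone M)) I = vmul M k (vsum M (\<lambda>_. vone M) I)"
  using parts(15)[OF assms] by blast

lemma le_one:
  assumes "idem_ordered_TGP M"
  shows "nle M a (vone M)"
  using parts(19)[OF assms] by blast

lemma sum_split:
  assumes M: "idem_ordered_TGP M" and d: "A \<inter> B = {}"
  shows "vsum M f (A \<union> B) = vadd M (vsum M f A) (vsum M f B)"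
proof -
  define x0 :: idx where "x0 = (\<lambda>_. 0)"
  define x1 :: idx where "x1 = (\<lambda>_. Suc 0)"
  have ne: "x0 \<noteq> x1" unfolding x0_def x1_def by (auto simp: fun_eq_iff)
  define II where "II = (\<lambda>j. if j = x0 then A else B)"
  have "vsum M (\<lambda>j. vsum M f (II j)) {x0, x1} = vsum M f (\<Union>j\<in>{x0,x1}. II j)"
    by (rule sum_part[OF M]) (use d ne in \<open>auto simp: II_def\<close>)
  moreover have "(\<Union>j\<in>{x0,x1}. II j) = A \<union> B" using ne by (auto simp: II_def)
  moreover have "vsum M (\<lambda>j. vsum M f (II j)) {x0, x1} = vadd M (vsum M f A) (vsum M f B)"
    using sum_pair[OF M ne] ne by (simp add: II_def)
  ultimately show ?thesis by simp
qed

lemma sum_zeros: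
  assumes M: "idem_ordered_TGP M" and z: "\<forall>i\<in>I. f i = vzero M"
  shows "vsum M f I = vzero M"
proof -
  have "vsum M f I = vsum M (\<lambda>_. vmul M (vzero M) (vone M)) I"
    using z by (intro sum_cong[OF M]) (simp add: mul_zero[OF M])
  also have "\<dots> = vzero M" using sum_const[OF M, of "vzero M" I] by (simp add: mul_zero[OF M])
  finally show ?thesis .
qed

lemma sum_bool:
  assumes M: "idem_ordered_TGP M" and b: "\<forall>i\<in>I. f i \<in> {vzero M, vone M}"
  shows "vsum M f I = (if \<exists>i\<in>I. f i = vone M then vone M else vzero M)"
proof -
  define A where "A = {i\<in>I. f i = vone M}"
  define B where "B = I - A"
  have I: "I = A \<union> B" "A \<inter> B = {}" unfolding A_def B_def by auto
  have SB: "vsum M f B = vzero M"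
    using b by (intro sum_zeros[OF M]) (auto simp: B_def A_def)
  have S: "vsum M f I = vsum M f A"
    using sum_split[OF M I(2)] I(1) SB add_zero[OF M] by simp
  show ?thesis
  proof (cases "A = {}")
    case True
    then have "vsum M f A = vzero M" using sum_empty[OF M] by simp
    moreover have "\<not> (\<exists>i\<in>I. f i = vone M)" using True by (auto simp: A_def)
    ultimately show ?thesis using S by simp
  next
    case False
    then obtain a where a: "a \<in> A" by blast
    have e: "A = {a} \<union> (A - {a})" using a by auto
    have dj: "{a} \<inter> (A - {a}) = {}" by auto
    have "vsum M f A = vsum M f ({a} \<union> (A - {a}))" using e by (rule arg_cong)
    also have "\<dots> = vadd M (vsum M f {a}) (vsum M f (A - {a}))"
      by (rule sum_split[OF M dj])
    finally have "vsum M f A = vadd M (vsum M f {a}) (vsum M f (A - {a}))" .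
    also have "\<dots> = vadd M (vone M) (vsum M f (A - {a}))"
      using a sum_single[OF M] by (simp add: A_def)
    also have "\<dots> = vone M"
      using le_one[OF M, of "vsum M f (A - {a})"] unfolding nle_def by (rule sym)
    finally show ?thesis using S a by (auto simp: A_def)
  qed
qed

lemma val_bool:
  assumes M: "idem_ordered_TGP M" and b: "\<forall>i. f i \<in> {vzero M, vone M}"
  shows "vval M f = (if \<forall>i. f i = vone M then vone M else vzero M)"
proof -
  have fv: "finval f" unfolding finval_def
    by (rule finite_subset[of _ "{vzero M, vone M}"]) (use b in auto)
  show ?thesis
  proof (cases "\<forall>i. f i = vone M")
    case True
    then have "f = (\<lambda>_. vone M)" by auto
    then show ?thesis using True val_one[OF M] by simp
  next
    case False
    then obtain i where "f i \<noteq> vone M" by auto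
    then have "f i = vzero M" using b by auto
    then show ?thesis using val_zero[OF M fv] False by auto
  qed
qed

lemma sb_bool:
  assumes M: "idem_ordered_TGP M" and zo: "vzero M \<noteq> vone M" and s: "sbLTL M \<phi>"
  shows "\<forall>w. sem M \<phi> w = (if sat w \<phi> then vone M else vzero M)"
  using s
proof (induction rule: sbLTL.induct)
  case sb_true
  then show ?case by (simp add: wtrue_def)
next
  case (sb_atom a)
  then show ?case by simp
next
  case (sb_natom a)
  then show ?case by simp
next
  case (sb_or \<phi> \<psi>)
  then show ?case by (simp add: add_zero[OF M] idem[OF M])
next
  case (sb_and \<phi> \<psi>)
  then show ?case by (simp add: mul_zero[OF M] mul_one[OF M])
next
  case (sb_next \<phi>)
  then show ?case by simp
next
  case (sb_box \<phi>)
  show ?case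
  proof
    fix w
    have "sem M (Box \<phi>) w = vval M (\<lambda>i. sem M \<phi> (suffix i w))" by simp
    also have "\<dots> = (if \<forall>i. sem M \<phi> (suffix i w) = vone M then vone M else vzero M)"
      using sb_box.IH by (intro val_bool[OF M]) auto
    also have "\<dots> = (if sat w (Box \<phi>) then vone M else vzero M)"
      using sb_box.IH zo by auto
    finally show "sem M (Box \<phi>) w = (if sat w (Box \<phi>) then vone M else vzero M)" .
  qed
next
  case (sb_wuntil \<phi> \<psi>)
  have box: "sem M (Box \<phi>) w = (if sat w (Box \<phi>) then vone M else vzero M)" for w
  proof -
    have "sem M (Box \<phi>) w = vval M (\<lambda>i. sem M \<phi> (suffix i w))" by simp
    also have "\<dots> = (if \<forall>i. sem M \<phi> (suffix i w) = vone M then vone M else vzero M)"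
      using sb_wuntil.IH by (intro val_bool[OF M]) auto
    also have "\<dots> = (if sat w (Box \<phi>) then vone M else vzero M)"
      using sb_wuntil.IH zo by auto
    finally show ?thesis .
  qed
  have until: "sem M (Until \<phi> \<psi>) w = (if sat w (Until \<phi> \<psi>) then vone M else vzero M)" for w
  proof -
    define g where "g = (\<lambda>i. vval M (\<lambda>j. if j < i then sem M \<phi> (suffix j w)
                              else if j = i then sem M \<psi> (suffix i w)
                              else vone M))"
    have g: "g i = (if (\<forall>j<i. sat (suffix j w) \<phi>) \<and> sat (suffix i w) \<psi> then vone M else vzero M)" for i
    proof -
      have "g i = (if \<forall>j. (if j < i then sem M \<phi> (suffix j w)
                              else if j = i then sem M \<psi> (suffix i w)
                              else vone M) = vone M then vone M else vzero M)"
        unfolding g_def using sb_wuntil.IH by (intro val_bool[OF M]) auto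
      also have "(\<forall>j. (if j < i then sem M \<phi> (suffix j w)
                              else if j = i then sem M \<psi> (suffix i w)
                              else vone M) = vone M) \<longleftrightarrow>
          (\<forall>j<i. sat (suffix j w) \<phi>) \<and> sat (suffix i w) \<psi>"
      proof
        assume h: "\<forall>j. (if j < i then sem M \<phi> (suffix j w)
                              else if j = i then sem M \<psi> (suffix i w)
                              else vone M) = vone M"
        have "\<forall>j<i. sat (suffix j w) \<phi>"
        proof (intro allI impI)
          fix j assume "j < i"
          then show "sat (suffix j w) \<phi>" using spec[OF h, of j] sb_wuntil.IH zo zo[symmetric] by (auto split: if_splits)
        qed
        moreover have "sat (suffix i w) \<psi>" using spec[OF h, of i] sb_wuntil.IH zo zo[symmetric] by (auto split: if_splits)
        ultimately show "(\<forall>j<i. sat (suffix j w) \<phi>) \<and> sat (suffix i w) \<psi>" by blast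
      next
        assume "(\<forall>j<i. sat (suffix j w) \<phi>) \<and> sat (suffix i w) \<psi>"
        then show "\<forall>j. (if j < i then sem M \<phi> (suffix j w)
                              else if j = i then sem M \<psi> (suffix i w)
                              else vone M) = vone M" using sb_wuntil.IH by auto
      qed
      finally show ?thesis .
    qed
    have "sem M (Until \<phi> \<psi>) w = vsum M (\<lambda>u. g (u 0)) (nat_emb ` UNIV)"
      by (simp add: nsum_def g_def)
    also have "\<dots> = (if \<exists>u\<in>nat_emb ` UNIV. g (u 0) = vone M then vone M else vzero M)"
      using g by (intro sum_bool[OF M]) auto
    also have "(\<exists>u\<in>nat_emb ` UNIV. g (u 0) = vone M) \<longleftrightarrow> (\<exists>i. g i = vone M)"
      by (auto simp: nat_emb_def)
    also have "\<dots> \<longleftrightarrow> sat w (Until \<phi> \<psi>)" using g zo by auto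
    finally show ?thesis .
  qed
  show ?case
  proof
    fix w
    show "sem M (WUntil \<phi> \<psi>) w = (if sat w (WUntil \<phi> \<psi>) then vone M else vzero M)"
      unfolding WUntil_def sem.simps(4) sat.simps(4) box until
      by (auto simp add: add_zero[OF M] idem[OF M])
  qed
qed

lemma nle_trans:
  assumes M: "idem_ordered_TGP M" and "nle M a b" "nle M b c"
  shows "nle M a c"
proof -
  have ab: "b = vadd M b a" and bc: "c = vadd M c b" using assms(2,3) unfolding nle_def by auto
  have "vadd M c a = vadd M (vadd M c b) a" using bc by simp
  also have "\<dots> = vadd M c (vadd M b a)" by (rule add_assoc[OF M])
  also have "\<dots> = c" using ab bc by simp
  finally show ?thesis unfolding nle_def by simp
qed

lemma nle_add:
  assumes M: "idem_ordered_TGP M"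
  shows "nle M k (vadd M a b) \<longleftrightarrow> nle M k a \<or> nle M k b"
proof (cases "nle M a b")
  case True
  then have "vadd M b a = b" unfolding nle_def by simp
  then have "vadd M a b = b" using add_comm[OF M, of a b] by simp
  then show ?thesis using True nle_trans[OF M] by auto
next
  case False
  then have "nle M b a" using total[OF M] by blast
  then have "vadd M a b = a" unfolding nle_def by simp
  then show ?thesis using \<open>nle M b a\<close> nle_trans[OF M] by auto
qed

theorem lemma6:
  fixes M :: "'k tgp" and k :: 'k
    and ps :: "('k \<times> ('k, 'ap::finite) wltl) list"
    and w :: "'ap word"
  assumes "idem_ordered_TGP M"
    and "k \<noteq> vzero M" and "k \<noteq> vone M"
    and "kstLTL M k ps"
  shows "nle M k (sem M (stform ps) w) \<longleftrightarrow> sat w (bskel ps)"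
proof -
  note M = assms(1)
  have zo: "vzero M \<noteq> vone M"
  proof
    assume e: "vzero M = vone M"
    have "nle M k (vone M)" by (rule le_one[OF M])
    then have "vzero M = vadd M (vzero M) k" using e unfolding nle_def by simp
    then show False using add_zero[OF M] assms(2) by simp
  qed
  have nz: "\<not> nle M k (vzero M)" using add_zero[OF M] assms(2) unfolding nle_def by simp
  have one: "nle M k (sem M (And (Const ki) \<phi>i) w) \<longleftrightarrow> sat w \<phi>i"
    if "(ki, \<phi>i) \<in> set ps" for ki \<phi>i
  proof -
    have h: "nle M k ki" "sbLTL M \<phi>i" using assms(4) that unfolding kstLTL_def by auto
    show ?thesis using sb_bool[OF M zo h(2)] h(1) nz
      by (simp add: mul_zero[OF M] mul_one[OF M])
  qed
  have main: "set qs \<subseteq> set ps \<Longrightarrow> qs \<noteq> [] \<Longrightarrow>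
      nle M k (sem M (stform qs) w) \<longleftrightarrow> sat w (bskel qs)" for qs
  proof (induction qs rule: induct_list012)
    case 1 then show ?case by simp
  next
    case (2 x) then show ?case using one by (cases x) (auto simp: stform_def bskel_def)
  next
    case (3 x y zs)
    have "nle M k (sem M (stform (x # y # zs)) w) \<longleftrightarrow>
        nle M k (sem M (And (Const (fst x)) (snd x)) w) \<or> nle M k (sem M (stform (y # zs)) w)"
      by (cases x) (simp add: stform_def nle_add[OF M])
    also have "\<dots> \<longleftrightarrow> sat w (snd x) \<or> sat w (bskel (y # zs))"
      using 3 one[of "fst x" "snd x"] by auto
    finally show ?case by (simp add: bskel_def)
  qed
  show ?thesis using main[of ps] assms(4) unfolding kstLTL_def by auto
qed

end
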